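(* Let $r\in\mathbb{N}$, let $\mathbf{e}=(e_1,\ldots,e_r)\in\mathbb{Z}^r$, and suppose the Jordan totient quotient $J_{\mathbf e}$ has weight $w=\sum_{i=1}^r ie_i=0$. Then $\mathfrak{S}_{\mathbf e}>0$ and, for $x\ge 2$, \[ \sum_{n\le x}J_{\mathbf e}(n)=\mathfrak{S}_{\mathbf e}\,x+O_{\mathbf e}\big((\log x)^{|e_1|}\big). \]
   Context: Throughout, $p$ denotes a prime. For an integer $k\ge1$, the $k$-th Jordan totient is $J_k(n)=n^k\prod_{p\mid n}(1-p^{-k})$. For $\mathbf e=(e_1,\ldots,e_r)\in\mathbb{Z}^r$ the Jordan totient quotient is $J_{\mathbf e}(n)=\prod_{i=1}^r J_i(n)^{e_i}=n^w\prod_{p\mid n}\prod_{i=1}^r(1-p^{-i})^{e_i}$, where $w=\sum_i ie_i$ is its weight. Define $\mathfrak{S}_{\mathbf e}=\prod_p\left(1+\frac{J_{\mathbf e}(p)p^{-w}-1}{p}\right)$. *)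

theory Defs
  imports "HOL-Analysis.Analysis" "HOL-Computational_Algebra.Primes"
begin

definition jordan_totient :: "nat \<Rightarrow> nat \<Rightarrow> real" where
  "jordan_totient k n = real n ^ k * (\<Prod>p\<in>prime_factors n. 1 - 1 / real p ^ k)"

definition jordan_quot :: "(nat \<Rightarrow> int) \<Rightarrow> nat \<Rightarrow> nat \<Rightarrow> real" where
  "jordan_quot e r n = (\<Prod>i\<in>{1..r}. jordan_totient i n powi e i)"

definition jq_weight :: "(nat \<Rightarrow> int) \<Rightarrow> nat \<Rightarrow> int" where
  "jq_weight e r = (\<Sum>i\<in>{1..r}. int i * e i)"

definition jq_factor :: "(nat \<Rightarrow> int) \<Rightarrow> nat \<Rightarrow> nat \<Rightarrow> real" where
  "jq_factor e r p = (if prime p then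
      1 + (jordan_quot e r p * real p powi (- jq_weight e r) - 1) / real p else 1)"

definition jq_sing :: "(nat \<Rightarrow> int) \<Rightarrow> nat \<Rightarrow> real" where
  "jq_sing e r = (\<Prod>p. jq_factor e r p)"

end

theory Submission
  imports Defs
begin


definition fp :: "(nat \<Rightarrow> int) \<Rightarrow> nat \<Rightarrow> nat \<Rightarrow> real" where
  "fp e r p = (\<Prod>i\<in>{1..r}. (1 - 1 / real p ^ i) powi e i)"

lemma powi_prod: "finite A \<Longrightarrow> (\<Prod>x\<in>A. f x) powi k = (\<Prod>x\<in>A. (f x :: real) powi k)"
  by (induction A rule: finite_induct) (auto simp: power_int_mult_distrib)

lemma prod_powi_sum: assumes "x \<noteq> 0" "finite A" shows "(\<Prod>i\<in>A. (x::real) powi k i) = x powi (\<Sum>i\<in>A. k i)"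
  using assms(2) by (induction A rule: finite_induct) (auto simp: power_int_add assms(1))

lemma jq_mult:
  assumes w: "jq_weight e r = 0" and n: "n \<ge> 1"
  shows "jordan_quot e r n = (\<Prod>p\<in>prime_factors n. fp e r p)"
proof -
  have "jordan_quot e r n = (\<Prod>i\<in>{1..r}. real n powi (int i * e i) * (\<Prod>p\<in>prime_factors n. (1 - 1/real p ^ i) powi e i))"
    unfolding jordan_quot_def jordan_totient_def
    by (intro prod.cong refl) (simp add: power_int_mult_distrib powi_prod power_int_power)
  also have "\<dots> = (\<Prod>i\<in>{1..r}. real n powi (int i * e i)) * (\<Prod>i\<in>{1..r}. \<Prod>p\<in>prime_factors n. (1 - 1/real p ^ i) powi e i)"
    by (rule prod.distrib)
  also have "(\<Prod>i\<in>{1..r}. real n powi (int i * e i)) = 1"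
    using n w by (simp add: prod_powi_sum jq_weight_def)
  also have "(\<Prod>i\<in>{1..r}. \<Prod>p\<in>prime_factors n. (1 - 1/real p ^ i) powi e i) = (\<Prod>p\<in>prime_factors n. fp e r p)"
    unfolding fp_def by (rule prod.swap)
  finally show ?thesis by simp
qed

lemma jq_prime: assumes w: "jq_weight e r = 0" and p: "prime p"
  shows "jq_factor e r p = 1 + (fp e r p - 1) / real p"
proof -
  have "prime_factors p = {p}" using p by (simp add: prime_prime_factors)
  then show ?thesis using jq_mult[OF w, of p] p prime_gt_0_nat[OF p]
    by (simp add: jq_factor_def w)
qed

lemma prime_factors_prod_primes:
  assumes "finite D" "\<forall>p\<in>D. prime p"
  shows "prime_factors (\<Prod>D) = (D::nat set)"
proof -
  have "prime_factors (\<Prod>D) = \<Union>((prime_factors \<circ> (\<lambda>x. x)) ` D)"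
    using assms by (intro prime_factors_prod) auto
  also have "\<dots> = D" using assms by (auto simp: prime_prime_factors)
  finally show ?thesis .
qed

lemma prod_primes_dvd:
  assumes "finite D" "\<forall>p\<in>D. prime p \<and> p dvd n"
  shows "\<Prod>D dvd (n::nat)"
  using assms
proof (induction D rule: finite_induct)
  case (insert p D)
  have "\<not> p dvd \<Prod>D"
  proof
    assume "p dvd \<Prod>D"
    then obtain q where "q \<in> D" "p dvd q" using insert prime_dvd_prod_iff[of D p "\<lambda>x. x"] by auto
    then have "p = q" using insert by (metis insert_iff primes_dvd_imp_eq)
    then show False using insert \<open>q \<in> D\<close> by auto
  qed
  then have "coprime p (\<Prod>D)" using insert by (simp add: prime_imp_coprime)
  then show ?case using insert by (simp add: divides_mult)
qed simp

lemma subset_pf_iff: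
  assumes "n > 0"
  shows "D \<subseteq> prime_factors n \<longleftrightarrow> finite D \<and> (\<forall>p\<in>D. prime p) \<and> \<Prod>D dvd (n::nat)"
proof
  assume "D \<subseteq> prime_factors n"
  moreover have "finite (prime_factors n)" by simp
  ultimately show "finite D \<and> (\<forall>p\<in>D. prime p) \<and> \<Prod>D dvd n"
    by (auto intro!: prod_primes_dvd dest: finite_subset)
next
  assume a: "finite D \<and> (\<forall>p\<in>D. prime p) \<and> \<Prod>D dvd n"
  show "D \<subseteq> prime_factors n"
  proof
    fix p assume "p \<in> D"
    then have "p dvd \<Prod>D" using a by (metis dvd_triv_left prod.remove)
    then have "p dvd n" using a dvd_trans by blast
    then show "p \<in> prime_factors n" using a \<open>p\<in>D\<close> assms by (auto simp: in_prime_factors_iff)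
  qed
qed

definition hh :: "(nat \<Rightarrow> int) \<Rightarrow> nat \<Rightarrow> nat \<Rightarrow> real" where
  "hh e r p = fp e r p - 1"
definition HH :: "(nat \<Rightarrow> int) \<Rightarrow> nat \<Rightarrow> nat set \<Rightarrow> real" where
  "HH e r D = (\<Prod>p\<in>D. hh e r p)"

lemma J_expand:
  assumes w: "jq_weight e r = 0" and n: "n \<ge> 1"
  shows "jordan_quot e r n = (\<Sum>D\<in>Pow (prime_factors n). HH e r D)"
proof -
  have "jordan_quot e r n = (\<Prod>p\<in>prime_factors n. hh e r p + 1)"
    unfolding jq_mult[OF w n] hh_def by simp
  also have "\<dots> = (\<Sum>D\<in>Pow (prime_factors n). HH e r D)"
    by (subst prod_add) (auto simp: HH_def)
  finally show ?thesis .
qed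

definition FN :: "nat \<Rightarrow> nat set set" where
  "FN N = {D. D \<subseteq> {p. prime p \<and> p \<le> N} \<and> \<Prod>D \<le> N}"

lemma finite_FN: "finite (FN N)"
proof -
  have "FN N \<subseteq> Pow {..N}" by (auto simp: FN_def)
  then show ?thesis by (rule finite_subset) auto
qed

lemma card_multiples:
  assumes "d > (0::nat)"
  shows "card {n\<in>{1..N}. d dvd n} = N div d"
proof -
  have "{n\<in>{1..N}. d dvd n} = (\<lambda>k. d*k) ` {1..N div d}"
  proof (safe)
    fix n assume "n \<in> {1..N}" "d dvd n"
    then obtain k where k: "n = d*k" by auto
    then have "k \<ge> 1" "d * k \<le> N" using \<open>n \<in> {1..N}\<close> by (auto intro: Nat.gr0I)
    then have "k \<in> {1..N div d}" using assms by (auto simp: less_eq_div_iff_mult_less_eq mult.commute)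
    then show "n \<in> (\<lambda>k. d*k) ` {1..N div d}" using k by auto
  next
    fix k assume "k \<in> {1..N div d}"
    then show "d * k \<in> {1..N}" using assms
      by (auto simp: less_eq_div_iff_mult_less_eq mult.commute)
  qed auto
  moreover have "inj_on (\<lambda>k. d*k) {1..N div d}" using assms by (auto simp: inj_on_def)
  ultimately show ?thesis by (simp add: card_image)
qed

lemma prod_primes_pos: "\<forall>p\<in>D. prime p \<Longrightarrow> \<Prod>D > (0::nat)"
  by (metis prime_gt_0_nat prod_pos)

lemma sum_J:
  assumes w: "jq_weight e r = 0"
  shows "(\<Sum>n\<in>{1..N}. jordan_quot e r n) = (\<Sum>D\<in>FN N. HH e r D * real (N div \<Prod>D))"
proof -
  have pw: "Pow (prime_factors n) = {D\<in>FN N. \<Prod>D dvd n}" if n: "n \<in> {1..N}" for n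
  proof (safe)
    fix D assume D: "D \<subseteq> prime_factors n"
    then have *: "finite D \<and> (\<forall>p\<in>D. prime p) \<and> \<Prod>D dvd n" using subset_pf_iff[of n D] n by auto
    then have "\<Prod>D \<le> N" using n dvd_imp_le[of "\<Prod>D" n] by auto
    moreover have "\<forall>p\<in>D. p \<le> N"
    proof
      fix p assume "p \<in> D"
      then have "p dvd n" using D by auto
      then show "p \<le> N" using n dvd_imp_le[of p n] by auto
    qed
    ultimately show "D \<in> FN N" using * by (auto simp: FN_def)
    show "\<Prod>D dvd n" using * by simp
  next
    fix D x assume "D \<in> FN N" "\<Prod>D dvd n" "x \<in> D"
    moreover have "finite D" using \<open>D \<in> FN N\<close> by (auto simp: FN_def intro: finite_subset)
    ultimately show "x \<in> prime_factors n" using subset_pf_iff[of n D] n by (auto simp: FN_def)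
  qed
  have "(\<Sum>n\<in>{1..N}. jordan_quot e r n) = (\<Sum>n\<in>{1..N}. \<Sum>D\<in>{D\<in>FN N. \<Prod>D dvd n}. HH e r D)"
    by (intro sum.cong refl) (simp add: J_expand[OF w] pw)
  also have "\<dots> = (\<Sum>D\<in>FN N. \<Sum>n\<in>{n\<in>{1..N}. \<Prod>D dvd n}. HH e r D)"
    using sum.swap_restrict[of "{1..N}" "FN N" "\<lambda>n D. HH e r D" "\<lambda>n D. \<Prod>D dvd n"] finite_FN
    by simp
  also have "\<dots> = (\<Sum>D\<in>FN N. HH e r D * real (N div \<Prod>D))"
  proof (intro sum.cong refl)
    fix D assume "D \<in> FN N"
    then have "\<Prod>D > 0" by (intro prod_primes_pos) (auto simp: FN_def)
    then show "(\<Sum>n\<in>{n\<in>{1..N}. \<Prod>D dvd n}. HH e r D) = HH e r D * real (N div \<Prod>D)"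
      using card_multiples[of "\<Prod>D" N] by simp
  qed
  finally show ?thesis .
qed



lemma L1nat:
  fixes u :: real
  assumes "0 \<le> u" "u \<le> 1"
  shows "\<bar>(1-u)^m - 1 + m*u\<bar> \<le> m^2 * u^2"
proof (induction m)
  case (Suc m)
  have eq: "(1-u)^(Suc m) - 1 + (Suc m)*u = (1-u)*((1-u)^m - 1 + m*u) + m*u^2"
    by (simp add: algebra_simps power2_eq_square)
  have "\<bar>(1-u)*((1-u)^m - 1 + m*u)\<bar> \<le> \<bar>(1-u)^m - 1 + m*u\<bar>"
    using assms by (simp add: abs_mult mult_left_le_one_le)
  moreover have "\<bar>(1-u)*((1-u)^m - 1 + m*u) + m*u^2\<bar> \<le> \<bar>(1-u)*((1-u)^m - 1 + m*u)\<bar> + \<bar>m*u^2\<bar>"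
    by (rule abs_triangle_ineq)
  moreover have "\<bar>m*u^2\<bar> = m*u^2" by simp
  ultimately have "\<bar>(1-u)^(Suc m) - 1 + (Suc m)*u\<bar> \<le> real m^2*u^2 + m*u^2"
    unfolding eq using Suc by linarith
  also have "\<dots> = (real m^2 + m) * u^2" by (simp add: algebra_simps)
  also have "\<dots> \<le> (Suc m)^2 * u^2"
    by (intro mult_right_mono) (auto simp: power2_eq_square)
  finally show ?case by simp
qed simp

lemma bern:
  fixes u :: real
  assumes "0 \<le> u" "u \<le> 1"
  shows "1 - m*u \<le> (1-u)^m"
  using Bernoulli_inequality[of "-u" m] assms by simp

lemma L1:
  "\<exists>C. \<forall>u::real. 0 \<le> u \<and> u \<le> 1/2 \<longrightarrow> \<bar>(1-u) powi k - 1 + k*u\<bar> \<le> C*u^2"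
proof (cases "k \<ge> 0")
  case True
  define m where "m = nat k"
  have k: "k = int m" using True by (simp add: m_def)
  show ?thesis
    by (rule exI[of _ "real m^2"]) (auto simp: k intro!: L1nat)
next
  case False
  define m where "m = nat (-k)"
  have k: "k = - int m" using False by (simp add: m_def)
  show ?thesis
  proof (rule exI[of _ "2 * real m^2 * 2^m"], safe)
    fix u :: real assume u: "0 \<le> u" "u \<le> 1/2"
    define y where "y = (1-u)^m"
    have y1: "y \<ge> (1/2)^m" unfolding y_def using u by (intro power_mono) auto
    have ypos: "y > 0" by (rule less_le_trans[OF _ y1]) simp
    have yle: "y \<le> 1" unfolding y_def using u by (intro power_le_one) auto
    have "1/y \<le> 1/((1/2)^m)" using y1 ypos by (intro divide_left_mono) auto
    then have iy: "1/y \<le> 2^m" by (simp add: power_one_over)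
    have e1: "\<bar>y - 1 + m*u\<bar> \<le> real m^2*u^2" unfolding y_def using u by (intro L1nat) auto
    have e2: "1 - y \<le> m*u" unfolding y_def using bern[of u m] u by simp
    have p: "(1-u) powi k = 1/y" by (simp add: k power_int_minus y_def divide_inverse)
    have eq: "(1-u) powi k - 1 + k*u = (1 - y - m*u*y) / y"
      unfolding p using ypos by (simp add: k field_simps)
    have mu0: "m*u \<ge> 0" using u by simp
    have "1 - y - m*u*y = -(y - 1 + m*u) + m*u*(1-y)" by (simp add: algebra_simps)
    then have "\<bar>1 - y - m*u*y\<bar> \<le> \<bar>y - 1 + m*u\<bar> + \<bar>m*u*(1-y)\<bar>"
      by (metis abs_minus_cancel abs_triangle_ineq)
    also have "\<bar>m*u*(1-y)\<bar> = m*u*(1-y)" using mu0 yle by simp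
    also have "m*u*(1-y) \<le> m*u*(m*u)" using e2 mu0 by (rule mult_left_mono)
    finally have "\<bar>1 - y - m*u*y\<bar> \<le> \<bar>y - 1 + m*u\<bar> + m*u*(m*u)" by simp
    also have "\<dots> \<le> real m^2*u^2 + m*u*(m*u)"
      using e1 by simp
    also have "\<dots> = 2*real m^2*u^2" by (simp add: power2_eq_square)
    finally have n1: "\<bar>1 - y - m*u*y\<bar> \<le> 2*real m^2*u^2" .
    have "\<bar>(1-u) powi k - 1 + k*u\<bar> = \<bar>1 - y - m*u*y\<bar> * (1/y)"
      unfolding eq using ypos by (simp add: abs_divide)
    also have "\<dots> \<le> (2*real m^2*u^2) * 2^m"
      using n1 iy ypos by (intro mult_mono) auto
    finally show "\<bar>(1-u) powi k - 1 + k*u\<bar> \<le> 2 * real m^2 * 2^m * u^2" by (simp add: mult_ac)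
  qed
qed

lemma L2:
  "\<exists>C. \<forall>v::real. 0 \<le> v \<and> v \<le> 1/2 \<longrightarrow> \<bar>(1-v) powi k - 1\<bar> \<le> C* v"
proof -
  obtain C where C: "\<And>u::real. 0 \<le> u \<and> u \<le> 1/2 \<Longrightarrow> \<bar>(1-u) powi k - 1 + k*u\<bar> \<le> C*u^2"
    using L1[of k] by blast
  show ?thesis
  proof (rule exI[of _ "\<bar>C\<bar> + \<bar>k\<bar>"], safe)
    fix v :: real assume v: "0 \<le> v" "v \<le> 1/2"
    have "\<bar>(1-v) powi k - 1\<bar> \<le> \<bar>(1-v) powi k - 1 + k* v\<bar> + \<bar>k* v\<bar>" by linarith
    also have "\<bar>k* v\<bar> = \<bar>k\<bar>* v" using v by (simp add: abs_mult)
    also have "\<bar>(1-v) powi k - 1 + k* v\<bar> \<le> C* v^2" using C v by auto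
    also have "C* v^2 \<le> \<bar>C\<bar>* v"
    proof -
      have "C* v^2 \<le> \<bar>C\<bar>* v^2" using v by (intro mult_right_mono) auto
      also have "\<dots> \<le> \<bar>C\<bar>* v"
      proof -
        have "v * v \<le> v" using v by (intro mult_left_le_one_le) auto
        then show ?thesis by (intro mult_left_mono) (auto simp: power2_eq_square)
      qed
      finally show ?thesis .
    qed
    finally show "\<bar>(1-v) powi k - 1\<bar> \<le> (\<bar>C\<bar> + \<bar>k\<bar>)* v" by (simp add: algebra_simps)
  qed
qed

lemma C_nonneg:
  assumes "\<And>u::real. 0 \<le> u \<and> u \<le> 1/2 \<Longrightarrow> \<bar>X u\<bar> \<le> C*u^2"
  shows "C \<ge> 0"
proof -
  have "\<bar>X (1/2)\<bar> \<le> C*(1/2)^2" using assms by auto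
  then have "0 \<le> C*(1/2)^2" by (meson abs_ge_zero order_trans)
  then show ?thesis by (simp add: zero_le_mult_iff)
qed

lemma prod_close:
  fixes g :: "nat \<Rightarrow> real \<Rightarrow> real"
  assumes "finite I" "\<forall>i\<in>I. \<exists>C. \<forall>u. 0\<le>u \<and> u\<le>1/2 \<longrightarrow> \<bar>g i u - 1\<bar> \<le> C*u^2"
  shows "\<exists>C. \<forall>u. 0\<le>u \<and> u\<le>1/2 \<longrightarrow> \<bar>(\<Prod>i\<in>I. g i u) - 1\<bar> \<le> C*u^2"
  using assms
proof (induction I rule: finite_induct)
  case (insert i I)
  obtain Ci where Ci: "\<And>u. 0\<le>u \<and> u\<le>1/2 \<Longrightarrow> \<bar>g i u - 1\<bar> \<le> Ci*u^2" using insert by blast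
  obtain CI where CI: "\<And>u. 0\<le>u \<and> u\<le>1/2 \<Longrightarrow> \<bar>(\<Prod>i\<in>I. g i u) - 1\<bar> \<le> CI*u^2" using insert by blast
  have Ci0: "Ci \<ge> 0" by (rule C_nonneg[OF Ci])
  have CI0: "CI \<ge> 0" by (rule C_nonneg[OF CI])
  show ?case
  proof (rule exI[of _ "Ci*(1+CI) + CI"], safe)
    fix u :: real assume u: "0 \<le> u" "u \<le> 1/2"
    define P where "P = (\<Prod>i\<in>I. g i u)"
    have u2: "u^2 \<le> 1" using u by (simp add: power_le_one)
    have P1: "\<bar>P - 1\<bar> \<le> CI*u^2" using CI u unfolding P_def by auto
    have "CI*u^2 \<le> CI" using u2 CI0 by (simp add: mult_left_le)
    then have Pb: "\<bar>P\<bar> \<le> 1 + CI" using P1 by linarith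
    have gi: "\<bar>g i u - 1\<bar> \<le> Ci*u^2" using Ci u by auto
    have "(\<Prod>i\<in>insert i I. g i u) - 1 = (g i u - 1) * P + (P - 1)"
      using insert by (simp add: P_def algebra_simps)
    then have "\<bar>(\<Prod>i\<in>insert i I. g i u) - 1\<bar> \<le> \<bar>g i u - 1\<bar> * \<bar>P\<bar> + \<bar>P - 1\<bar>"
      by (metis abs_mult abs_triangle_ineq)
    also have "\<bar>g i u - 1\<bar> * \<bar>P\<bar> \<le> (Ci*u^2) * (1 + CI)"
      using gi Pb by (intro mult_mono) auto
    finally show "\<bar>(\<Prod>i\<in>insert i I. g i u) - 1\<bar> \<le> (Ci*(1+CI) + CI)*u^2"
      using P1 by (simp add: algebra_simps)
  qed
qed (auto intro: exI[of _ 0])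

definition FF :: "(nat \<Rightarrow> int) \<Rightarrow> nat \<Rightarrow> real \<Rightarrow> real" where
  "FF e r u = (\<Prod>i\<in>{1..r}. (1 - u^i) powi e i)"

lemma FF_bound:
  "\<exists>c\<ge>0. \<forall>u. 0\<le>u \<and> u\<le>1/2 \<longrightarrow> \<bar>FF e r u - 1\<bar> \<le> \<bar>real_of_int (e 1)\<bar>*u + c*u^2"
proof (cases "r = 0")
  case True
  then show ?thesis by (auto simp: FF_def intro!: exI[of _ 0])
next
  case False
  then have r: "{1..r} = insert 1 {2..r}" by auto
  have "\<exists>C. \<forall>u::real. 0\<le>u \<and> u\<le>1/2 \<longrightarrow> \<bar>(\<Prod>i\<in>{2..r}. (1 - u^i) powi e i) - 1\<bar> \<le> C*u^2"
  proof (rule prod_close, simp, safe)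
    fix i assume i: "i \<in> {2..r}"
    obtain C where C: "\<And>v::real. 0 \<le> v \<and> v \<le> 1/2 \<Longrightarrow> \<bar>(1-v) powi e i - 1\<bar> \<le> C* v"
      using L2[of "e i"] by blast
    have C0: "C \<ge> 0"
    proof -
      have "\<bar>(1-1/2) powi e i - 1\<bar> \<le> C*(1/2)" using C[of "1/2"] by simp
      then have "0 \<le> C*(1/2)" by (meson abs_ge_zero order_trans)
      then show ?thesis by simp
    qed
    show "\<exists>C. \<forall>u::real. 0\<le>u \<and> u\<le>1/2 \<longrightarrow> \<bar>(1 - u^i) powi e i - 1\<bar> \<le> C*u^2"
    proof (rule exI[of _ C], safe)
      fix u :: real assume u: "0 \<le> u" "u \<le> 1/2"
      have ui: "u^i \<le> u^2" using u i by (intro power_decreasing) auto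
      have "u*u \<le> u" using u by (intro mult_left_le_one_le) auto
      then have "u^i \<le> 1/2" using ui u by (simp add: power2_eq_square)
      then have "\<bar>(1 - u^i) powi e i - 1\<bar> \<le> C*u^i" using C u by auto
      also have "\<dots> \<le> C*u^2" using ui C0 by (rule mult_left_mono)
      finally show "\<bar>(1 - u^i) powi e i - 1\<bar> \<le> C*u^2" .
    qed
  qed
  then obtain CG where CG: "\<And>u::real. 0\<le>u \<and> u\<le>1/2 \<Longrightarrow> \<bar>(\<Prod>i\<in>{2..r}. (1 - u^i) powi e i) - 1\<bar> \<le> CG*u^2"
    by blast
  obtain C1 where C1: "\<And>u::real. 0 \<le> u \<and> u \<le> 1/2 \<Longrightarrow> \<bar>(1-u) powi e 1 - 1 + e 1*u\<bar> \<le> C1*u^2"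
    using L1[of "e 1"] by blast
  have CG0: "CG \<ge> 0" by (rule C_nonneg[OF CG])
  have C10: "C1 \<ge> 0" by (rule C_nonneg[OF C1])
  define B where "B = 1 + \<bar>real_of_int (e 1)\<bar> + C1"
  show ?thesis
  proof (rule exI[of _ "B*CG + C1"], rule conjI)
    show "0 \<le> B*CG + C1" using CG0 C10 by (simp add: B_def)
  next
    show "\<forall>u. 0\<le>u \<and> u\<le>1/2 \<longrightarrow> \<bar>FF e r u - 1\<bar> \<le> \<bar>real_of_int (e 1)\<bar>*u + (B*CG + C1)*u^2"
    proof (intro allI impI)
    fix u :: real assume u': "0 \<le> u \<and> u \<le> 1/2"
    then have u: "0 \<le> u" "u \<le> 1/2" by auto
    define F1 where "F1 = (1-u) powi e 1"
    define G where "G = (\<Prod>i\<in>{2..r}. (1 - u^i) powi e i)"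
    have FF: "FF e r u = F1 * G" unfolding FF_def F1_def G_def r by simp
    have u2: "u^2 \<le> 1" using u by (simp add: power_le_one)
    have e1: "\<bar>F1 - 1 + e 1*u\<bar> \<le> C1*u^2" using C1 u unfolding F1_def by auto
    have g: "\<bar>G - 1\<bar> \<le> CG*u^2" using CG u unfolding G_def by auto
    have "\<bar>e 1 * u\<bar> \<le> \<bar>real_of_int (e 1)\<bar>" using u by (simp add: abs_mult mult_left_le)
    moreover have "C1*u^2 \<le> C1" using C10 u2 by (simp add: mult_left_le)
    ultimately have F1b: "\<bar>F1\<bar> \<le> B" using e1 unfolding B_def by linarith
    have eq: "FF e r u - 1 = F1 * (G - 1) + (F1 - 1 + e 1*u) - e 1*u"
      unfolding FF by (simp add: algebra_simps)
    have t: "\<bar>X + Y - Z\<bar> \<le> \<bar>X\<bar> + \<bar>Y\<bar> + \<bar>Z\<bar>" for X Y Z :: real by arith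
    have am: "\<bar>F1 * (G - 1)\<bar> = \<bar>F1\<bar> * \<bar>G - 1\<bar>" by (rule abs_mult)
    have b1: "\<bar>F1\<bar> * \<bar>G - 1\<bar> \<le> B * (CG*u^2)" using F1b g by (intro mult_mono) auto
    have b2: "\<bar>e 1*u\<bar> = \<bar>real_of_int (e 1)\<bar>*u" using u by (simp add: abs_mult)
    have b3: "B*(CG*u^2) + C1*u^2 = (B*CG + C1)*u^2" by (simp add: algebra_simps)
    have "\<bar>FF e r u - 1\<bar> \<le> \<bar>F1 * (G - 1)\<bar> + \<bar>F1 - 1 + e 1*u\<bar> + \<bar>e 1*u\<bar>"
      unfolding eq by (rule t)
    then show "\<bar>FF e r u - 1\<bar> \<le> \<bar>real_of_int (e 1)\<bar>*u + (B*CG + C1)*u^2"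
      using am b1 b2 b3 e1 by linarith
  qed
  qed
qed



lemma powr_step:
  fixes s :: real and d :: nat
  assumes s: "s > 0" and d: "d \<ge> 2"
  shows "s * real d powr (-(1+s)) \<le> real (d-1) powr (-s) - real d powr (-s)"
proof -
  define y where "y = 1 / real d"
  have y: "0 < y" "y \<le> 1/2" using d by (auto simp: y_def field_simps)
  have dd: "real (d-1) = real d * (1 - y)" using d by (simp add: y_def field_simps of_nat_diff)
  have "ln (1 - y) \<le> - y" using ln_le_minus_one[of "1-y"] y by simp
  then have "s * ln (1-y) \<le> s * (-y)" using s by (intro mult_left_mono) auto
  then have "1 + s*y \<le> 1 - s * ln (1-y)" by simp
  also have "\<dots> \<le> exp (- s * ln (1-y))" using exp_ge_add_one_self[of "- s * ln (1-y)"] by simp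
  also have "exp (- s * ln (1-y)) = (1-y) powr (-s)" using y by (simp add: powr_def)
  finally have b: "1 + s*y \<le> (1-y) powr (-s)" .
  have "real (d-1) powr (-s) = real d powr (-s) * (1-y) powr (-s)"
    unfolding dd using y d by (simp add: powr_mult)
  also have "\<dots> \<ge> real d powr (-s) * (1 + s*y)" using b by (intro mult_left_mono) auto
  finally have "real (d-1) powr (-s) - real d powr (-s) \<ge> s * (real d powr (-s) * y)"
    by (simp add: algebra_simps)
  moreover have "real d powr (-s) * y = real d powr (-(1+s))"
  proof -
    have "real d powr (-s + -1) = real d powr (-s) * real d powr (-1)" by (rule powr_add)
    moreover have "real d powr (-1) = y" using d by (simp add: y_def powr_minus_divide)
    moreover have "-s + -1 = -(1+s)" by simp
    ultimately show ?thesis by metis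
  qed
  ultimately show ?thesis by simp
qed

lemma zeta_bound_aux:
  fixes s :: real
  assumes s: "s > 0" and M: "M \<ge> 1"
  shows "(\<Sum>d\<in>{1..M}. real d powr (-(1+s))) \<le> 1 + (1 - real M powr (-s)) / s"
  using M
proof (induction M rule: dec_induct)
  case base
  then show ?case by simp
next
  case (step M)
  have "(\<Sum>d\<in>{1..Suc M}. real d powr (-(1+s))) = (\<Sum>d\<in>{1..M}. real d powr (-(1+s))) + real (Suc M) powr (-(1+s))"
    by simp
  also have "\<dots> \<le> 1 + (1 - real M powr (-s)) / s + (real M powr (-s) - real (Suc M) powr (-s)) / s"
  proof -
    have "s * real (Suc M) powr (-(1+s)) \<le> real M powr (-s) - real (Suc M) powr (-s)"
      using powr_step[OF s, of "Suc M"] step by simp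
    then have "real (Suc M) powr (-(1+s)) \<le> (real M powr (-s) - real (Suc M) powr (-s)) / s"
      using s by (simp add: pos_le_divide_eq mult.commute)
    then show ?thesis using step.IH by linarith
  qed
  also have "\<dots> = 1 + (1 - real (Suc M) powr (-s)) / s" by (simp add: diff_divide_distrib)
  finally show ?case .
qed

lemma zeta_bound:
  fixes s :: real
  assumes s: "s > 0"
  shows "(\<Sum>d\<in>{1..M}. real d powr (-(1+s))) \<le> 1 + 1 / s"
proof (cases "M \<ge> 1")
  case True
  have "(\<Sum>d\<in>{1..M}. real d powr (-(1+s))) \<le> 1 + (1 - real M powr (-s)) / s"
    by (rule zeta_bound_aux[OF s True])
  also have "\<dots> \<le> 1 + 1/s" using s by (simp add: divide_right_mono)
  finally show ?thesis .
next
  case False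
  then show ?thesis using s by simp
qed

lemma inv_sq_sum: "(\<Sum>n\<in>{2..M}. 1 / real n ^ 2) \<le> 1"
proof -
  have "M \<ge> 1 \<Longrightarrow> (\<Sum>n\<in>{2..M}. 1 / real n ^ 2) \<le> 1 - 1 / real M" for M
  proof (induction M rule: dec_induct)
    case base then show ?case by simp
  next
    case (step M)
    have "1 / real (Suc M) ^ 2 \<le> 1 / (real M * real (Suc M))"
      using step by (intro divide_left_mono) (auto simp: power2_eq_square)
    also have "\<dots> = 1 / real M - 1 / real (Suc M)" using step by (simp add: field_simps)
    finally have "1 / real (Suc M) ^ 2 \<le> 1 / real M - 1 / real (Suc M)" .
    then show ?case using step by (simp add: atLeastAtMostSuc_conv)
  qed
  then show ?thesis by (cases "M \<ge> 1") (auto, smt (verit) divide_nonneg_nonneg of_nat_0_le_iff)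
qed

lemma inj_prod_primes:
  "inj_on (\<lambda>D. \<Prod>D) {D. finite D \<and> (\<forall>p\<in>D. prime (p::nat))}"
  by (intro inj_onI) (metis (mono_tags, lifting) mem_Collect_eq prime_factors_prod_primes)

lemma prod_pow_sum:
  assumes "finite P" "\<forall>p\<in>P. prime p" "\<sigma> > 0"
  shows "(\<Prod>p\<in>P. 1 + real p powr (-(1+\<sigma>))) \<le> 1 + 1/\<sigma>"
proof -
  define g where "g = (\<lambda>d::nat. real d powr (-(1+\<sigma>)))"
  have "(\<Prod>p\<in>P. 1 + real p powr (-(1+\<sigma>))) = (\<Prod>p\<in>P. g p + 1)"
    by (simp add: g_def add.commute)
  also have "\<dots> = (\<Sum>D\<in>Pow P. \<Prod>p\<in>D. g p)"
    using assms by (subst prod_add) auto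
  also have "\<dots> = (\<Sum>D\<in>Pow P. g (\<Prod>D))"
  proof (intro sum.cong refl)
    fix D assume D: "D \<in> Pow P"
    show "(\<Prod>p\<in>D. g p) = g (\<Prod>D)"
      unfolding g_def by (simp add: prod_powr_distrib)
  qed
  also have "\<dots> = (\<Sum>d\<in>(\<lambda>D. \<Prod>D) ` Pow P. g d)"
  proof -
    have "Pow P \<subseteq> {D. finite D \<and> (\<forall>p\<in>D. prime (p::nat))}"
      using assms by (auto intro: finite_subset)
    then have inj: "inj_on (\<lambda>D. \<Prod>D) (Pow P)" using inj_prod_primes inj_on_subset by blast
    show ?thesis by (simp add: sum.reindex[OF inj] o_def)
  qed
  also have "\<dots> \<le> (\<Sum>d\<in>{1..\<Prod>P}. g d)"
  proof (rule sum_mono2)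
    show "(\<lambda>D. \<Prod>D) ` Pow P \<subseteq> {1..\<Prod>P}"
    proof safe
      fix D assume "D \<subseteq> P"
      have pos: "\<Prod>P > 0" "\<Prod>D > 0" using assms \<open>D \<subseteq> P\<close> by (metis prod_primes_pos subset_eq)+
      have "\<Prod>D dvd \<Prod>P" using \<open>D \<subseteq> P\<close> assms by (intro prod_dvd_prod_subset) auto
      then show "\<Prod>D \<in> {1..\<Prod>P}" using pos by (auto intro: dvd_imp_le)
    qed
  qed (auto simp: g_def)
  also have "\<dots> \<le> 1 + 1/\<sigma>" unfolding g_def by (rule zeta_bound) (rule assms)
  finally show ?thesis .
qed

lemma euler_bound:
  fixes a :: nat and c \<sigma> :: real
  assumes P: "finite P" "\<forall>p\<in>P. prime p" and c: "c \<ge> 0" and s: "\<sigma> > 0"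
  shows "(\<Prod>p\<in>P. 1 + (a + c/p) * real p powr (-(1+\<sigma>))) \<le> exp c * (1 + 1/\<sigma>)^a"
proof -
  define x where "x = (\<lambda>p::nat. real p powr (-(1+\<sigma>)))"
  have pw: "1 + (a + c/p) * x p \<le> (1 + x p)^a * (1 + c/real p^2)" if p: "p \<in> P" for p
  proof -
    have p2: "real p \<ge> 2" using P p prime_ge_2_nat by auto
    have x0: "x p \<ge> 0" by (simp add: x_def)
    have "x p \<le> real p powr (-1)" unfolding x_def using p2 s by (intro powr_mono) auto
    then have xp: "x p \<le> 1 / p" using p2 by (simp add: powr_minus_divide)
    have "c/p * x p \<le> c/p * (1/p)" using xp c p2 by (intro mult_left_mono) auto
    then have cx: "c/p * x p \<le> c/real p^2" by (simp add: power2_eq_square)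
    have bern: "1 + a * x p \<le> (1 + x p)^a" using Bernoulli_inequality[of "x p" a] x0 by simp
    have ex: "(1 + a * x p) * (1 + c/real p^2) = 1 + a * x p + c/real p^2 + (a * x p) * (c/real p^2)"
      by (simp add: algebra_simps add_divide_distrib)
    have "(a * x p) * (c/real p^2) \<ge> 0" using x0 c by simp
    moreover have "(a + c/p) * x p = a * x p + c/p * x p" by (simp add: algebra_simps)
    ultimately have "1 + (a + c/p) * x p \<le> (1 + a * x p) * (1 + c/real p^2)"
      using cx ex by linarith
    also have "\<dots> \<le> (1 + x p)^a * (1 + c/real p^2)" using bern c by (intro mult_right_mono) auto
    finally show ?thesis .
  qed
  have "(\<Prod>p\<in>P. 1 + (a + c/p) * x p) \<le> (\<Prod>p\<in>P. (1 + x p)^a * (1 + c/real p^2))"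
  proof (rule prod_mono, safe)
    fix p assume "p \<in> P"
    then have "real p \<ge> 2" using P prime_ge_2_nat by auto
    then show "0 \<le> 1 + (a + c/p) * x p" using c by (simp add: x_def)
  qed (rule pw)
  also have "\<dots> = (\<Prod>p\<in>P. 1 + x p)^a * (\<Prod>p\<in>P. 1 + c/real p^2)"
    by (simp add: prod.distrib prod_power_distrib)
  also have "\<dots> \<le> (1 + 1/\<sigma>)^a * exp c"
  proof (intro mult_mono)
    show "(\<Prod>p\<in>P. 1 + x p)^a \<le> (1 + 1/\<sigma>)^a"
      using prod_pow_sum[OF P s] by (intro power_mono) (auto simp: x_def intro!: prod_nonneg)
    have "(\<Prod>p\<in>P. 1 + c/real p^2) \<le> (\<Prod>p\<in>P. exp (c/real p^2))"
      by (intro prod_mono) (auto simp: c)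
    also have "\<dots> = exp (\<Sum>p\<in>P. c/real p^2)" using P by (simp add: exp_sum)
    also have "(\<Sum>p\<in>P. c/real p^2) \<le> c"
    proof -
      obtain M where M: "\<forall>p\<in>P. p \<le> M" using P finite_nat_set_iff_bounded_le by auto
      have "P \<subseteq> {2..M}" using M P prime_ge_2_nat by auto
      then have "(\<Sum>p\<in>P. 1/real p^2) \<le> (\<Sum>p\<in>{2..M}. 1/real p^2)"
        by (intro sum_mono2) auto
      also have "\<dots> \<le> 1" by (rule inv_sq_sum)
      finally have "c * (\<Sum>p\<in>P. 1/real p^2) \<le> c * 1" using c by (intro mult_left_mono)
      then show ?thesis by (simp add: sum_distrib_left)
    qed
    then have "exp (\<Sum>p\<in>P. c/real p^2) \<le> exp c" by simp
    finally show "(\<Prod>p\<in>P. 1 + c/real p^2) \<le> exp c" .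
  qed (use s in \<open>auto simp: x_def intro!: prod_nonneg add_nonneg_nonneg divide_nonneg_nonneg c\<close>)
  finally show ?thesis by (simp add: x_def mult.commute)
qed



definition PF :: "nat set set" where "PF = {D. finite D \<and> (\<forall>p\<in>D. prime p)}"

definition GG :: "nat \<Rightarrow> real \<Rightarrow> nat set \<Rightarrow> real" where
  "GG a c D = (\<Prod>p\<in>D. real a + c / real p)"

lemma fp_FF: "fp e r p = FF e r (1 / real p)"
  by (simp add: fp_def FF_def power_one_over)

lemma hh_bound_ex:
  "\<exists>c\<ge>0. \<forall>p. prime p \<longrightarrow> \<bar>hh e r p\<bar> \<le> (real (nat \<bar>e 1\<bar>) + c / real p) / real p"
proof -
  obtain c where c: "c \<ge> 0" "\<And>u. 0\<le>u \<and> u\<le>1/2 \<Longrightarrow> \<bar>FF e r u - 1\<bar> \<le> \<bar>real_of_int (e 1)\<bar>*u + c*u^2"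
    using FF_bound[of e r] by blast
  show ?thesis
  proof (rule exI[of _ c], intro conjI allI impI)
    show "0 \<le> c" by fact
    fix p :: nat assume p: "prime p"
    have p2: "real p \<ge> 2" using prime_ge_2_nat[OF p] by simp
    have "\<bar>hh e r p\<bar> = \<bar>FF e r (1/p) - 1\<bar>" by (simp add: hh_def fp_FF)
    also have "\<dots> \<le> \<bar>real_of_int (e 1)\<bar> * (1/p) + c*(1/p)^2" using c(2)[of "1/p"] p2 by simp
    also have "\<dots> = (real (nat \<bar>e 1\<bar>) + c/p)/p" using p2 by (simp add: field_simps power2_eq_square)
    finally show "\<bar>hh e r p\<bar> \<le> (real (nat \<bar>e 1\<bar>) + c/p)/p" .
  qed
qed

lemma rankin:
  assumes A: "finite A" "A \<subseteq> PF" and c: "c \<ge> 0" and s: "\<sigma> > 0"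
  shows "(\<Sum>D\<in>A. GG a c D * real (\<Prod>D) powr (-(1+\<sigma>))) \<le> exp c * (1 + 1/\<sigma>)^a"
proof -
  define P where "P = \<Union>A"
  have P: "finite P" "\<forall>p\<in>P. prime p" using A by (auto simp: P_def PF_def)
  have AP: "A \<subseteq> Pow P" by (auto simp: P_def)
  have nn: "GG a c D * real (\<Prod>D) powr (-(1+\<sigma>)) \<ge> 0" for D
    using c by (auto simp: GG_def intro!: prod_nonneg mult_nonneg_nonneg)
  define t where "t = (\<lambda>p::nat. (real a + c / real p) * real p powr (-(1+\<sigma>)))"
  have "(\<Sum>D\<in>A. GG a c D * real (\<Prod>D) powr (-(1+\<sigma>))) \<le> (\<Sum>D\<in>Pow P. GG a c D * real (\<Prod>D) powr (-(1+\<sigma>)))"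
    by (rule sum_mono2) (use P AP nn in auto)
  also have "\<dots> = (\<Sum>D\<in>Pow P. \<Prod>p\<in>D. t p)"
  proof (intro sum.cong refl)
    fix D assume "D \<in> Pow P"
    show "GG a c D * real (\<Prod>D) powr (-(1+\<sigma>)) = (\<Prod>p\<in>D. t p)"
      by (simp add: t_def GG_def prod.distrib prod_powr_distrib)
  qed
  also have "\<dots> = (\<Prod>p\<in>P. t p + 1)"
    using P by (subst prod_add) auto
  also have "\<dots> = (\<Prod>p\<in>P. 1 + (real a + c / real p) * real p powr (-(1+\<sigma>)))"
    by (simp add: t_def add.commute)
  also have "\<dots> \<le> exp c * (1 + 1/\<sigma>)^a" by (rule euler_bound[OF P c s])
  finally show ?thesis .
qed

lemma HH_bound:
  assumes hb: "\<forall>p. prime p \<longrightarrow> \<bar>hh e r p\<bar> \<le> (real a + c / real p) / real p" and D: "D \<in> PF"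
  shows "\<bar>HH e r D\<bar> \<le> GG a c D / real (\<Prod>D)"
proof -
  have "\<bar>HH e r D\<bar> = (\<Prod>p\<in>D. \<bar>hh e r p\<bar>)" by (simp add: HH_def abs_prod)
  also have "\<dots> \<le> (\<Prod>p\<in>D. (real a + c / real p) / real p)"
    using D hb by (intro prod_mono) (auto simp: PF_def)
  also have "\<dots> = GG a c D / real (\<Prod>D)" by (simp add: GG_def prod_dividef)
  finally show ?thesis .
qed

lemma GG_nonneg: "c \<ge> 0 \<Longrightarrow> GG a c D \<ge> 0"
  by (auto simp: GG_def intro!: prod_nonneg)

lemma fp_pos: assumes "prime p" shows "fp e r p > 0"
proof -
  have p2: "real p \<ge> 2" using prime_ge_2_nat[OF assms] by simp
  have "1 / real p ^ i < 1" if "i \<ge> 1" for i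
  proof -
    have "real p ^ 1 \<le> real p ^ i" by (rule power_increasing) (use that p2 in auto)
    then have "real p \<le> real p ^ i" by (simp only: power_one_right)
    then have "real p ^ i > 1" using p2 by linarith
    then show ?thesis by (subst divide_less_eq_1) auto
  qed
  then show ?thesis unfolding fp_def by (intro prod_pos) auto
qed

lemma jq_factor_eq:
  assumes w: "jq_weight e r = 0"
  shows "jq_factor e r k = 1 + (if prime k then hh e r k / real k else 0)"
  using jq_prime[OF w] by (auto simp: jq_factor_def hh_def)

lemma jq_factor_pos:
  assumes w: "jq_weight e r = 0"
  shows "jq_factor e r k > 0"
proof (cases "prime k")
  case True
  have p2: "real k \<ge> 2" using prime_ge_2_nat[OF True] by simp
  have "jq_factor e r k = (real k - 1 + fp e r k) / real k"
    using jq_factor_eq[OF w, of k] True p2 by (simp add: hh_def field_simps)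
  moreover have "fp e r k > 0" using fp_pos[OF True] .
  ultimately show ?thesis using p2 by simp
qed (simp add: jq_factor_def)

lemma conv_prod:
  assumes w: "jq_weight e r = 0" and c: "c \<ge> 0"
    and hb: "\<forall>p. prime p \<longrightarrow> \<bar>hh e r p\<bar> \<le> (real a + c / real p) / real p"
  shows "convergent_prod (jq_factor e r)"
proof -
  define z where "z = (\<lambda>k. if prime k then hh e r k / real k else 0)"
  have jz: "jq_factor e r = (\<lambda>k. 1 + z k)" using jq_factor_eq[OF w] by (auto simp: z_def)
  have zb: "norm \<bar>z k\<bar> \<le> (real a + c) * inverse (real k ^ 2)" for k
  proof (cases "prime k")
    case True
    have p2: "real k \<ge> 2" using prime_ge_2_nat[OF True] by simp
    have "\<bar>z k\<bar> = \<bar>hh e r k\<bar> / real k" using True by (simp add: z_def abs_divide)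
    also have "\<dots> \<le> ((real a + c / real k) / real k) / real k"
      using hb True p2 by (intro divide_right_mono) auto
    also have "\<dots> = (real a + c / real k) * inverse (real k ^ 2)"
      by (simp add: power2_eq_square divide_inverse mult.assoc)
    also have "\<dots> \<le> (real a + c) * inverse (real k ^ 2)"
    proof -
      have "c / real k \<le> c / 1" using p2 c by (intro divide_left_mono) auto
      then have "c / real k \<le> c" by simp
      then show ?thesis by (intro mult_right_mono) auto
    qed
    finally show ?thesis by simp
  next
    case False
    then show ?thesis using c by (simp add: z_def)
  qed
  have "summable (\<lambda>k. inverse (real k ^ 2))" by (rule inverse_power_summable) simp
  then have "summable (\<lambda>k. (real a + c) * inverse (real k ^ 2))" by (rule summable_mult)
  then have "summable (\<lambda>k. \<bar>z k\<bar>)" by (rule summable_comparison_test'[where N=0]) (rule zb)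
  moreover have "z k \<noteq> -1" for k
  proof -
    have "jq_factor e r k = 1 + z k" using jz by simp
    then show ?thesis using jq_factor_pos[OF w, of k] by linarith
  qed
  ultimately show ?thesis unfolding jz by (rule summable_imp_convergent_prod_real)
qed

definition ff :: "(nat \<Rightarrow> int) \<Rightarrow> nat \<Rightarrow> nat set \<Rightarrow> real" where
  "ff e r D = HH e r D / real (\<Prod>D)"

lemma powr_m2: assumes "d > 0" shows "real d powr (-(1+1)) = 1 / (real d)^2"
proof -
  have "real d powr (-(1+1)) = inverse (real d powr 2)" by (simp add: powr_minus)
  also have "real d powr 2 = real d ^ 2" using assms by (simp add: powr_numeral)
  finally show ?thesis by (simp add: divide_inverse)
qed

lemma PF_prod_pos: "D \<in> PF \<Longrightarrow> \<Prod>D > (0::nat)"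
  unfolding PF_def by (intro prod_primes_pos) auto

lemma ff_abs_bound:
  assumes hb: "\<forall>p. prime p \<longrightarrow> \<bar>hh e r p\<bar> \<le> (real a + c / real p) / real p"
    and c: "c \<ge> 0" and D: "D \<in> PF"
  shows "\<bar>ff e r D\<bar> \<le> GG a c D * real (\<Prod>D) powr (-(1+1))"
proof -
  have d: "real (\<Prod>D) > 0" using PF_prod_pos[OF D] by (metis of_nat_0_less_iff)
  have "\<bar>ff e r D\<bar> = \<bar>HH e r D\<bar> / real (\<Prod>D)" unfolding ff_def by (simp only: abs_divide abs_of_nat)
  also have "\<dots> \<le> (GG a c D / real (\<Prod>D)) / real (\<Prod>D)"
    using HH_bound[OF hb D] d by (intro divide_right_mono) auto
  also have "\<dots> = GG a c D * (1 / (real (\<Prod>D))^2)" by (simp add: power2_eq_square)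
  also have "\<dots> = GG a c D * real (\<Prod>D) powr (-(1+1))" by (simp only: powr_m2[OF PF_prod_pos[OF D]])
  finally show ?thesis .
qed

lemma ff_summable:
  assumes hb: "\<forall>p. prime p \<longrightarrow> \<bar>hh e r p\<bar> \<le> (real a + c / real p) / real p"
    and c: "c \<ge> 0"
  shows "(\<lambda>D. norm (ff e r D)) summable_on PF"
proof -
  have "bdd_above ((\<lambda>F. \<Sum>D\<in>F. norm (ff e r D)) ` {F. F \<subseteq> PF \<and> finite F})"
  proof (rule bdd_aboveI2)
    fix F assume F: "F \<in> {F. F \<subseteq> PF \<and> finite F}"
    have "(\<Sum>D\<in>F. norm (ff e r D)) \<le> (\<Sum>D\<in>F. GG a c D * real (\<Prod>D) powr (-(1+1)))"
    proof (rule sum_mono)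
      fix D assume "D \<in> F"
      then have "D \<in> PF" using F by auto
      from ff_abs_bound[OF hb c this] show "norm (ff e r D) \<le> GG a c D * real (\<Prod>D) powr (-(1+1))"
        by (simp only: real_norm_def)
    qed
    also have "\<dots> \<le> exp c * (1 + 1/1)^a" using F c by (intro rankin) auto
    finally show "(\<Sum>D\<in>F. norm (ff e r D)) \<le> exp c * (1 + 1/1)^a" .
  qed
  then show ?thesis by (intro nonneg_bdd_above_summable_on) auto
qed

lemma partial_prod:
  assumes w: "jq_weight e r = 0"
  shows "(\<Prod>i\<le>n. jq_factor e r i) = (\<Sum>D\<in>Pow {p. prime p \<and> p \<le> n}. ff e r D)"
proof -
  define S where "S = {p. prime p \<and> p \<le> n}"
  have fS: "finite S" by (simp add: S_def)
  have "(\<Prod>i\<le>n. jq_factor e r i) = (\<Prod>i\<in>S. jq_factor e r i)"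
    by (rule prod.mono_neutral_right) (auto simp: S_def jq_factor_def)
  also have "\<dots> = (\<Prod>i\<in>S. hh e r i / real i + 1)"
    by (intro prod.cong refl) (simp add: S_def jq_factor_eq[OF w])
  also have "\<dots> = (\<Sum>D\<in>Pow S. \<Prod>i\<in>D. hh e r i / real i)"
    using fS by (subst prod_add) auto
  also have "\<dots> = (\<Sum>D\<in>Pow S. ff e r D)"
    by (intro sum.cong refl) (simp add: ff_def HH_def prod_dividef)
  finally show ?thesis by (simp add: S_def)
qed

lemma filterlim_Pow:
  "filterlim (\<lambda>n. Pow {p. prime p \<and> p \<le> n}) (finite_subsets_at_top PF) sequentially"
  unfolding filterlim_finite_subsets_at_top
proof (intro allI impI, elim conjE)
  fix X assume X: "finite X" "X \<subseteq> PF"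
  have "finite (\<Union>X)" using X by (auto simp: PF_def)
  then obtain M where M: "\<forall>p\<in>\<Union>X. p \<le> M" using finite_nat_set_iff_bounded_le by auto
  show "\<forall>\<^sub>F n in sequentially. finite (Pow {p. prime p \<and> p \<le> n}) \<and> X \<subseteq> Pow {p. prime p \<and> p \<le> n}
        \<and> Pow {p. prime p \<and> p \<le> n} \<subseteq> PF"
    using eventually_ge_at_top[of M]
  proof eventually_elim
    case (elim n)
    have "X \<subseteq> Pow {p. prime p \<and> p \<le> n}"
      using X M elim by (force simp: PF_def)
    moreover have "Pow {p. prime p \<and> p \<le> n} \<subseteq> PF"
      by (auto simp: PF_def intro: finite_subset[of _ "{..n}"])
    ultimately show ?case by simp
  qed
qed

lemma S_eq:
  assumes w: "jq_weight e r = 0" and c: "c \<ge> 0"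
    and hb: "\<forall>p. prime p \<longrightarrow> \<bar>hh e r p\<bar> \<le> (real a + c / real p) / real p"
  shows "jq_sing e r = infsum (ff e r) PF"
proof -
  have cp: "convergent_prod (jq_factor e r)" by (rule conv_prod[OF w c hb])
  have l1: "(\<lambda>n. \<Prod>i\<le>n. jq_factor e r i) \<longlonglongrightarrow> jq_sing e r"
    unfolding jq_sing_def by (rule convergent_prod_LIMSEQ[OF cp])
  have "ff e r summable_on PF" by (rule abs_summable_summable[OF ff_summable[OF hb c]])
  then have "(ff e r has_sum infsum (ff e r) PF) PF" by (rule has_sum_infsum)
  then have "(sum (ff e r) \<longlongrightarrow> infsum (ff e r) PF) (finite_subsets_at_top PF)"
    by (simp add: has_sum_def)
  from filterlim_compose[OF this filterlim_Pow]
  have "(\<lambda>n. \<Prod>i\<le>n. jq_factor e r i) \<longlonglongrightarrow> infsum (ff e r) PF"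
    by (simp add: partial_prod[OF w])
  with l1 show ?thesis by (rule LIMSEQ_unique)
qed

lemma div_close:
  fixes x :: real
  assumes d: "d > 0" and N: "real N \<le> x" "x < real N + 1"
  shows "\<bar>real (N div d) - x / real d\<bar> \<le> 1"
proof -
  define q where "q = real (N div d)"
  define m where "m = real (N mod d)"
  have dd: "real d > 0" using d by simp
  have Nq: "real N = q * real d + m" unfolding q_def m_def
    by (metis of_nat_add of_nat_mult div_mult_mod_eq)
  have "N mod d + 1 \<le> d" using d by (simp add: Suc_le_eq)
  then have "real (N mod d + 1) \<le> real d" by (rule of_nat_mono)
  then have m: "0 \<le> m" "m + 1 \<le> real d" unfolding m_def by auto
  have "x / real d - q = (x - real N + m) / real d"
    using dd Nq by (simp add: diff_divide_distrib add_divide_distrib)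
  moreover have "0 \<le> (x - real N + m) / real d" using N m dd by simp
  moreover have "(x - real N + m) / real d \<le> 1" using N m dd by (simp add: divide_le_eq_1)
  ultimately show ?thesis unfolding q_def by linarith
qed

lemma FN_PF: "FN N \<subseteq> PF"
  by (auto simp: FN_def PF_def intro: finite_subset[of _ "{..N}"])

lemma not_FN:
  assumes D: "D \<in> PF" "D \<notin> FN N" shows "\<Prod>D > N"
proof (rule ccontr)
  assume "\<not> \<Prod>D > N"
  then have le: "\<Prod>D \<le> N" by simp
  have "D \<subseteq> {p. prime p \<and> p \<le> N}"
  proof
    fix p assume p: "p \<in> D"
    have fin: "finite D" using D by (simp add: PF_def)
    have "p dvd \<Prod>D" using p fin by (metis dvd_triv_left prod.remove)
    then have "p \<le> \<Prod>D" using PF_prod_pos[OF D(1)] by (rule dvd_imp_le)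
    then show "p \<in> {p. prime p \<and> p \<le> N}" using p D(1) le by (auto simp: PF_def)
  qed
  then have "D \<in> FN N" using le by (simp add: FN_def)
  then show False using D by simp
qed

lemma powr_split:
  assumes "d > (0::real)"
  shows "d powr (-(1+s)) * d powr s = 1 / d"
proof -
  have e1: "d powr (-(1+s) + s) = d powr (-(1+s)) * d powr s" by (rule powr_add)
  have e2: "-(1+s) + s = -1" by simp
  have e3: "d powr (-1) = 1 / d" using assms by (simp add: powr_minus_divide)
  show ?thesis using e1 e2 e3 by metis
qed

lemma main_bound:
  assumes w: "jq_weight e r = 0" and c: "c \<ge> 0"
    and hb: "\<forall>p. prime p \<longrightarrow> \<bar>hh e r p\<bar> \<le> (real a + c / real p) / real p"
    and x: "x \<ge> 2"
  shows "\<bar>(\<Sum>n\<in>{1..nat \<lfloor>x\<rfloor>}. jordan_quot e r n) - jq_sing e r * x\<bar>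
           \<le> 3 * exp 1 * (exp c * (2 + ln x)^a)"
proof -
  define N where "N = nat \<lfloor>x\<rfloor>"
  have fl: "\<lfloor>x\<rfloor> \<ge> 0" using x by simp
  have rN: "real N = real_of_int \<lfloor>x\<rfloor>" unfolding N_def using fl by simp
  have N: "real N \<le> x" "x < real N + 1" unfolding rN by auto
  have x0: "x > 0" using x by simp
  have lx: "ln x > 0" using x by simp
  define s where "s = 1 / (1 + ln x)"
  have s0: "s > 0" using lx by (simp add: s_def)
  have s1: "s \<le> 1" using lx by (simp add: s_def)
  have inv: "1 + 1/s = 2 + ln x" by (simp add: s_def)
  define E where "E = exp c * (1 + 1/s)^a"
  have xs: "x powr s \<le> exp 1"
  proof -
    have "x powr s = exp (s * ln x)" using x0 by (simp add: powr_def mult.commute)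
    moreover have "s * ln x \<le> 1" using lx by (simp add: s_def)
    ultimately show ?thesis by simp
  qed
  have xs0: "x powr s \<ge> 0" by simp
  have E0: "E \<ge> 0" using s0 by (simp add: E_def)
  have A: "(\<Sum>D\<in>FN N. \<bar>HH e r D\<bar>) \<le> x powr s * E"
  proof -
    have "(\<Sum>D\<in>FN N. \<bar>HH e r D\<bar>) \<le> (\<Sum>D\<in>FN N. x powr s * (GG a c D * real (\<Prod>D) powr (-(1+s))))"
    proof (rule sum_mono)
      fix D assume D: "D \<in> FN N"
      then have DP: "D \<in> PF" using FN_PF by auto
      have dpos: "real (\<Prod>D) > 0" using PF_prod_pos[OF DP] by (metis of_nat_0_less_iff)
      have "\<Prod>D \<le> N" using D by (simp add: FN_def)
      then have "real (\<Prod>D) \<le> real N" by (rule of_nat_mono)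
      then have dle: "real (\<Prod>D) \<le> x" using N by linarith
      have "\<bar>HH e r D\<bar> \<le> GG a c D / real (\<Prod>D)" by (rule HH_bound[OF hb DP])
      also have "\<dots> = GG a c D * (real (\<Prod>D) powr (-(1+s)) * real (\<Prod>D) powr s)"
        using powr_split[OF dpos, of s] by simp
      also have "\<dots> \<le> GG a c D * (real (\<Prod>D) powr (-(1+s)) * x powr s)"
        using GG_nonneg[OF c] dle s0 dpos by (intro mult_left_mono powr_mono2) auto
      finally show "\<bar>HH e r D\<bar> \<le> x powr s * (GG a c D * real (\<Prod>D) powr (-(1+s)))"
        by (simp add: mult_ac)
    qed
    also have "\<dots> = x powr s * (\<Sum>D\<in>FN N. GG a c D * real (\<Prod>D) powr (-(1+s)))"
      by (simp add: sum_distrib_left)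
    also have "\<dots> \<le> x powr s * E" unfolding E_def
      using finite_FN FN_PF c s0 by (intro mult_left_mono rankin) auto
    finally show ?thesis .
  qed
  have nsum: "(\<lambda>D. norm (ff e r D)) summable_on PF" by (rule ff_summable[OF hb c])
  have fsum: "ff e r summable_on PF" by (rule abs_summable_summable[OF nsum])
  have B: "\<bar>infsum (ff e r) (PF - FN N)\<bar> \<le> x powr (s - 1) * E"
  proof -
    have nsum': "(\<lambda>D. norm (ff e r D)) summable_on (PF - FN N)"
      by (rule summable_on_subset[OF nsum]) auto
    have "\<bar>infsum (ff e r) (PF - FN N)\<bar> \<le> infsum (\<lambda>D. norm (ff e r D)) (PF - FN N)"
      using norm_infsum_bound[of "ff e r" "PF - FN N"] nsum' by simp
    also have "\<dots> \<le> x powr (s - 1) * E"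
    proof (rule infsum_le_finite_sums[OF nsum'])
      fix F assume F: "finite F" "F \<subseteq> PF - FN N"
      have "(\<Sum>D\<in>F. norm (ff e r D)) \<le> (\<Sum>D\<in>F. x powr (s - 1) * (GG a c D * real (\<Prod>D) powr (-(1+s))))"
      proof (rule sum_mono)
        fix D assume D: "D \<in> F"
        then have DP: "D \<in> PF" and DN: "D \<notin> FN N" using F by auto
        have dpos: "real (\<Prod>D) > 0" using PF_prod_pos[OF DP] by (metis of_nat_0_less_iff)
        have "\<Prod>D \<ge> N + 1" using not_FN[OF DP DN] by simp
        then have "real (N + 1) \<le> real (\<Prod>D)" by (rule of_nat_mono)
        then have "real (\<Prod>D) \<ge> real N + 1" by simp
        then have dge: "real (\<Prod>D) \<ge> x" using N by linarith
        have "norm (ff e r D) \<le> GG a c D * real (\<Prod>D) powr (-(1+1))"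
          using ff_abs_bound[OF hb c DP] by (simp only: real_norm_def)
        also have "real (\<Prod>D) powr (-(1+1)) = real (\<Prod>D) powr (-(1+s)) * real (\<Prod>D) powr (s - 1)"
        proof -
          have "real (\<Prod>D) powr (-(1+s) + (s - 1)) = real (\<Prod>D) powr (-(1+s)) * real (\<Prod>D) powr (s - 1)"
            by (rule powr_add)
          moreover have "-(1+s) + (s - 1) = -(1+1::real)" by simp
          ultimately show ?thesis by metis
        qed
        also have "GG a c D * (real (\<Prod>D) powr (-(1+s)) * real (\<Prod>D) powr (s - 1))
                   \<le> GG a c D * (real (\<Prod>D) powr (-(1+s)) * x powr (s - 1))"
          using GG_nonneg[OF c] dge s1 x0 by (intro mult_left_mono powr_mono2') auto
        finally show "norm (ff e r D) \<le> x powr (s - 1) * (GG a c D * real (\<Prod>D) powr (-(1+s)))"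
          by (simp add: mult_ac)
      qed
      also have "\<dots> = x powr (s - 1) * (\<Sum>D\<in>F. GG a c D * real (\<Prod>D) powr (-(1+s)))"
        by (simp add: sum_distrib_left)
      also have "\<dots> \<le> x powr (s - 1) * E" unfolding E_def
        using F c s0 by (intro mult_left_mono rankin) auto
      finally show "(\<Sum>D\<in>F. norm (ff e r D)) \<le> x powr (s - 1) * E" .
    qed
    finally show ?thesis .
  qed
  have Seq: "jq_sing e r = (\<Sum>D\<in>FN N. ff e r D) + infsum (ff e r) (PF - FN N)"
  proof -
    have "jq_sing e r = infsum (ff e r) PF" by (rule S_eq[OF w c hb])
    also have "PF = FN N \<union> (PF - FN N)" using FN_PF by auto
    also have "infsum (ff e r) (FN N \<union> (PF - FN N)) = infsum (ff e r) (FN N) + infsum (ff e r) (PF - FN N)"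
      by (intro infsum_Un_disjoint summable_on_subset[OF fsum]) (use FN_PF in auto)
    also have "infsum (ff e r) (FN N) = (\<Sum>D\<in>FN N. ff e r D)" using finite_FN by simp
    finally show ?thesis .
  qed
  have "(\<Sum>n\<in>{1..N}. jordan_quot e r n) - jq_sing e r * x
        = (\<Sum>D\<in>FN N. HH e r D * (real (N div \<Prod>D) - x / real (\<Prod>D))) - x * infsum (ff e r) (PF - FN N)"
    unfolding sum_J[OF w] Seq
    by (simp add: ff_def algebra_simps sum_subtractf sum_distrib_left sum_distrib_right)
  also have "\<bar>\<dots>\<bar> \<le> (\<Sum>D\<in>FN N. \<bar>HH e r D\<bar>) + x * (x powr (s - 1) * E)"
  proof -
    have "\<bar>\<Sum>D\<in>FN N. HH e r D * (real (N div \<Prod>D) - x / real (\<Prod>D))\<bar>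
          \<le> (\<Sum>D\<in>FN N. \<bar>HH e r D * (real (N div \<Prod>D) - x / real (\<Prod>D))\<bar>)"
      by (rule sum_abs)
    also have "\<dots> \<le> (\<Sum>D\<in>FN N. \<bar>HH e r D\<bar>)"
    proof (rule sum_mono)
      fix D assume D: "D \<in> FN N"
      have "\<Prod>D > 0" using PF_prod_pos D FN_PF by auto
      then have "\<bar>real (N div \<Prod>D) - x / real (\<Prod>D)\<bar> \<le> 1" using N by (intro div_close) auto
      then have "\<bar>HH e r D\<bar> * \<bar>real (N div \<Prod>D) - x / real (\<Prod>D)\<bar> \<le> \<bar>HH e r D\<bar> * 1"
        by (intro mult_left_mono) auto
      then show "\<bar>HH e r D * (real (N div \<Prod>D) - x / real (\<Prod>D))\<bar> \<le> \<bar>HH e r D\<bar>"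
        by (simp add: abs_mult)
    qed
    finally have t1: "\<bar>\<Sum>D\<in>FN N. HH e r D * (real (N div \<Prod>D) - x / real (\<Prod>D))\<bar> \<le> (\<Sum>D\<in>FN N. \<bar>HH e r D\<bar>)" .
    have "\<bar>x * infsum (ff e r) (PF - FN N)\<bar> = x * \<bar>infsum (ff e r) (PF - FN N)\<bar>" using x0 by (simp add: abs_mult)
    also have "\<dots> \<le> x * (x powr (s - 1) * E)" using B x0 by (intro mult_left_mono) auto
    finally have t2: "\<bar>x * infsum (ff e r) (PF - FN N)\<bar> \<le> x * (x powr (s - 1) * E)" .
    show ?thesis using t1 t2 by linarith
  qed
  also have "x * (x powr (s - 1) * E) = x powr s * E"
  proof -
    have e: "x powr (1 + (s - 1)) = x powr 1 * x powr (s - 1)" by (rule powr_add)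
    have e2: "x powr 1 = x" using x0 by simp
    have e3: "1 + (s - 1) = s" by simp
    have xx: "x * x powr (s - 1) = x powr s" using e e2 e3 by metis
    show ?thesis by (metis xx mult.assoc)
  qed
  also have "(\<Sum>D\<in>FN N. \<bar>HH e r D\<bar>) + x powr s * E \<le> 2 * (x powr s * E)" using A by linarith
  also have "\<dots> \<le> 2 * (exp 1 * E)" using xs E0 by (intro mult_left_mono mult_right_mono) auto
  also have "\<dots> \<le> 3 * exp 1 * (exp c * (2 + ln x)^a)" using E0 lx by (simp add: E_def inv)
  finally show ?thesis unfolding N_def .
qed

theorem theorem2:
  fixes e :: "nat \<Rightarrow> int" and r :: nat
  assumes "jq_weight e r = 0"
  shows "convergent_prod (jq_factor e r) \<and> jq_sing e r > 0 \<and>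
    (\<exists>C. \<forall>x::real. x \<ge> 2 \<longrightarrow>
       \<bar>(\<Sum>n\<in>{1..nat \<lfloor>x\<rfloor>}. jordan_quot e r n) - jq_sing e r * x\<bar>
         \<le> C * ln x ^ nat \<bar>e 1\<bar>)"
proof -
  note w = assms
  define a where "a = nat \<bar>e 1\<bar>"
  obtain c where c: "c \<ge> 0" and hb: "\<forall>p. prime p \<longrightarrow> \<bar>hh e r p\<bar> \<le> (real a + c / real p) / real p"
    using hh_bound_ex[of e r] unfolding a_def by blast
  have cp: "convergent_prod (jq_factor e r)" by (rule conv_prod[OF w c hb])
  have pos: "jq_sing e r > 0"
  proof -
    have l1: "(\<lambda>n. \<Prod>i\<le>n. jq_factor e r i) \<longlonglongrightarrow> jq_sing e r"
      unfolding jq_sing_def by (rule convergent_prod_LIMSEQ[OF cp])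
    have "\<forall>n\<ge>0. 0 \<le> (\<Prod>i\<le>n. jq_factor e r i)"
      using jq_factor_pos[OF w] by (simp add: prod_nonneg less_imp_le)
    then have "0 \<le> jq_sing e r" by (intro LIMSEQ_le_const[OF l1]) blast
    moreover have "jq_sing e r \<noteq> 0" unfolding jq_sing_def
      using jq_factor_pos[OF w] by (intro prodinf_nonzero[OF cp]) (metis less_irrefl)
    ultimately show ?thesis by simp
  qed
  define K where "K = 1 + 2 / ln (2::real)"
  have "\<forall>x::real. x \<ge> 2 \<longrightarrow>
       \<bar>(\<Sum>n\<in>{1..nat \<lfloor>x\<rfloor>}. jordan_quot e r n) - jq_sing e r * x\<bar>
         \<le> (3 * exp 1 * exp c * K^a) * ln x ^ a"
  proof (intro allI impI)
    fix x :: real assume x: "x \<ge> 2"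
    have l2: "ln 2 > (0::real)" by simp
    have lx: "ln x \<ge> ln 2" using x by simp
    have "2 \<le> 2 / ln 2 * ln x"
    proof -
      have "2 / ln 2 * ln 2 \<le> 2 / ln 2 * ln x" using lx l2 by (intro mult_left_mono) auto
      then show ?thesis using l2 by simp
    qed
    then have kk: "2 + ln x \<le> K * ln x" by (simp add: K_def algebra_simps)
    have "(2 + ln x)^a \<le> (K * ln x)^a" using kk x by (intro power_mono) auto
    then have "exp c * (2 + ln x)^a \<le> exp c * (K * ln x)^a" by simp
    then have "3 * exp 1 * (exp c * (2 + ln x)^a) \<le> 3 * exp 1 * (exp c * (K * ln x)^a)" by simp
    also have "\<dots> = (3 * exp 1 * exp c * K^a) * ln x ^ a" by (simp add: power_mult_distrib)
    finally show "\<bar>(\<Sum>n\<in>{1..nat \<lfloor>x\<rfloor>}. jordan_quot e r n) - jq_sing e r * x\<bar>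
         \<le> (3 * exp 1 * exp c * K^a) * ln x ^ a"
      using main_bound[OF w c hb x] by linarith
  qed
  then show ?thesis using cp pos unfolding a_def by blast
qed


end
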